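(* Let $V\subseteq B(H)\otimes N$ be a quantum multi-relation on $(M,N)$, where $M$ and $N$ are minimally represented on $H$ and $K$, and let $\mathcal{A}_{\mathcal{P}_V}$ and $\mathcal{A}_{\mathcal{S}_V}$ be its quantum multi-adjacency operator and weighted adjacency operator. Then $$(\mathrm{id}\otimes\mathrm{tr}_{L^2(N)})(\mathcal{A}_{\mathcal{P}_V})=\mathcal{A}_{\mathcal{S}_V}.$$
   Context: All Hilbert spaces are finite dimensional. $M\subseteq B(H)$, $N\subseteq B(K)$ are finite-dimensional von Neumann algebras, minimally represented: $M'=Z(M)$, $N'=Z(N)$. $A^{op}$ denotes the opposite algebra. A quantum multi-relation on $(M,N)$ is a subspace $V\subseteq B(H)\otimes N$ which is an $(M'\otimes1)$–$(M'\otimes1)$ bimodule with $(1\otimes Z(N))V\subseteq V$. Weaver action: $\pi(T_1\otimes T_2\otimes T_3\otimes T_4)(S_1\otimes S_2)=T_1S_1T_2\otimes T_3S_2T_4$ of $M\otimes M^{op}\otimes N\otimes N^{op}$ on $B(H\otimes K)$ (with Hilbert–Schmidt inner product). The multi-edge indicator $\mathcal{P}_V$ is the projection in $M\otimes M^{op}\otimes N\otimes N^{op}$ such that $\pi(\mathcal{P}_V)$ is the orthogonal projection onto $V$. $\mathcal{S}_V=(\mathrm{id}\otimes\mathrm{id}\otimes\mathrm{tr}_K)(\mathrm{id}\otimes\mathrm{id}\otimes m)(\mathcal{P}_V)\in M\otimes M^{op}$, with $m(a\otimes b)=ab$ the multiplication of $N$. The quantum multi-adjacency operator $\mathcal{A}_{\mathcal{P}_V}:M\otimes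 N\to M\otimes N$ is $\mathcal{A}_{\mathcal{P}_V}(m\otimes n)=(\mathrm{tr}_H\otimes\mathrm{id}\otimes\mathrm{tr}_K\otimes\mathrm{id})(\mathcal{P}_V(m\otimes1\otimes n\otimes1))$ (product in $M\otimes M^{op}\otimes N\otimes N^{op}$, output identified with $M\otimes N$ as vector spaces); the weighted adjacency operator $\mathcal{A}_{\mathcal{S}_V}:M\to M$ is $\mathcal{A}_{\mathcal{S}_V}(m)=(\mathrm{tr}_H\otimes\mathrm{id})(\mathcal{S}_V(m\otimes1))$. $L^2(M)$, $L^2(N)$ are $M,N$ with Hilbert–Schmidt inner products from $\mathrm{tr}_H,\mathrm{tr}_K$; thus $\mathcal{A}_{\mathcal{P}_V}\in B(L^2(M))\otimes B(L^2(N))$, $\mathcal{A}_{\mathcal{S}_V}\in B(L^2(M))$, and $\mathrm{tr}_{L^2(N)}$ is the trace on $B(L^2(N))$. *)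

theory Defs
  imports Complex_Main
begin

text \<open>H = C^'h, K = C^'k for finite index types. An operator on a
finite-dimensional Hilbert space with basis indexed by 'a is its matrix 'a sqmat.
B(H (x) K) is identified with ('h x 'k) sqmat, and the Kronecker product kron a b
realises a (x) b. The algebraic tensor product B(H)(x)B(H)(x)B(K)(x)B(K) is realised
as ('h x 'h x 'k x 'k) sqmat (via kron4); as a vector space this is the same
for the opposite algebras.\<close>

type_synonym 'a sqmat = "'a \<Rightarrow> 'a \<Rightarrow> complex"

definition mmult :: "'a::finite sqmat \<Rightarrow> 'a sqmat \<Rightarrow> 'a sqmat" where
  "mmult A B = (\<lambda>i j. \<Sum>l\<in>UNIV. A i l * B l j)"

definition madj :: "'a sqmat \<Rightarrow> 'a sqmat" where
  "madj A = (\<lambda>i j. cnj (A j i))"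

definition mone :: "'a sqmat" where
  "mone = (\<lambda>i j. if i = j then 1 else 0)"

definition mtr :: "'a::finite sqmat \<Rightarrow> complex" where
  "mtr A = (\<Sum>i\<in>UNIV. A i i)"

text \<open>Hilbert--Schmidt inner product (unnormalised trace), linear in the 2nd slot.\<close>
definition hs_inner :: "'a::finite sqmat \<Rightarrow> 'a sqmat \<Rightarrow> complex" where
  "hs_inner A B = mtr (mmult (madj A) B)"

definition is_subspace :: "'a sqmat set \<Rightarrow> bool" where
  "is_subspace S \<longleftrightarrow> (\<lambda>i j. 0) \<in> S \<and> (\<forall>x\<in>S. \<forall>y\<in>S. (\<lambda>i j. x i j + y i j) \<in> S)
     \<and> (\<forall>c::complex. \<forall>x\<in>S. (\<lambda>i j. c * x i j) \<in> S)"

definition fd_vn_algebra :: "'a::finite sqmat set \<Rightarrow> bool" where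
  "fd_vn_algebra M \<longleftrightarrow> is_subspace M \<and> mone \<in> M \<and>
     (\<forall>x\<in>M. \<forall>y\<in>M. mmult x y \<in> M) \<and> (\<forall>x\<in>M. madj x \<in> M)"

definition commutant :: "'a::finite sqmat set \<Rightarrow> 'a sqmat set" where
  "commutant M = {x. \<forall>m\<in>M. mmult x m = mmult m x}"

definition center :: "'a::finite sqmat set \<Rightarrow> 'a sqmat set" where
  "center M = M \<inter> commutant M"

definition minimally_represented :: "'a::finite sqmat set \<Rightarrow> bool" where
  "minimally_represented M \<longleftrightarrow> commutant M = center M"

definition kron :: "'a sqmat \<Rightarrow> 'b sqmat \<Rightarrow> ('a \<times> 'b) sqmat" where
  "kron A B = (\<lambda>(i, k) (j, l). A i j * B k l)"

definition kron4 :: "'a sqmat \<Rightarrow> 'b sqmat \<Rightarrow> 'c sqmat \<Rightarrow> 'd sqmat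
    \<Rightarrow> ('a \<times> 'b \<times> 'c \<times> 'd) sqmat" where
  "kron4 A B C D = (\<lambda>(i1, i2, i3, i4) (j1, j2, j3, j4). A i1 j1 * B i2 j2 * C i3 j3 * D i4 j4)"

definition msum_list :: "'a sqmat list \<Rightarrow> 'a sqmat" where
  "msum_list xs = (\<lambda>i j. sum_list (map (\<lambda>x. x i j) xs))"

text \<open>Algebraic tensor products S (x) T and S1 (x) S2 (x) S3 (x) S4 (finite sums of
elementary tensors; scalars are absorbed since the factors are subspaces).\<close>
definition alg_tensor2 :: "'a sqmat set \<Rightarrow> 'b sqmat set \<Rightarrow> ('a \<times> 'b) sqmat set" where
  "alg_tensor2 S T = {msum_list (map (\<lambda>(a, b). kron a b) xs) | xs.
      \<forall>(a, b)\<in>set xs. a \<in> S \<and> b \<in> T}"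

definition alg_tensor4 :: "'a sqmat set \<Rightarrow> 'b sqmat set \<Rightarrow> 'c sqmat set \<Rightarrow> 'd sqmat set
    \<Rightarrow> ('a \<times> 'b \<times> 'c \<times> 'd) sqmat set" where
  "alg_tensor4 S1 S2 S3 S4 = {msum_list (map (\<lambda>(a, b, c, d). kron4 a b c d) xs) | xs.
      \<forall>(a, b, c, d)\<in>set xs. a \<in> S1 \<and> b \<in> S2 \<and> c \<in> S3 \<and> d \<in> S4}"

definition quantum_multi_relation ::
  "'h::finite sqmat set \<Rightarrow> 'k::finite sqmat set \<Rightarrow> ('h \<times> 'k) sqmat set \<Rightarrow> bool" where
  "quantum_multi_relation M N V \<longleftrightarrow>
     is_subspace V \<and> V \<subseteq> alg_tensor2 UNIV N \<and>
     (\<forall>z\<in>commutant M. \<forall>v\<in>V. mmult (kron z mone) v \<in> V \<and> mmult v (kron z mone) \<in> V) \<and>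
     (\<forall>z\<in>center N. \<forall>v\<in>V. mmult (kron mone z) v \<in> V)"

text \<open>Weaver action: the linear extension of
pi(T1 (x) T2 (x) T3 (x) T4)(S1 (x) S2) = T1 S1 T2 (x) T3 S2 T4, written in coordinates.\<close>
definition weaver_pi :: "('h::finite \<times> 'h \<times> 'k::finite \<times> 'k) sqmat
    \<Rightarrow> ('h \<times> 'k) sqmat \<Rightarrow> ('h \<times> 'k) sqmat" where
  "weaver_pi X S = (\<lambda>(p, q) (r, s). \<Sum>a\<in>UNIV. \<Sum>b\<in>UNIV. \<Sum>c\<in>UNIV. \<Sum>d\<in>UNIV.
       X (p, c, q, d) (a, r, b, s) * S (a, b) (c, d))"

definition is_orth_proj_onto :: "'a::finite sqmat set \<Rightarrow> ('a sqmat \<Rightarrow> 'a sqmat) \<Rightarrow> bool" where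
  "is_orth_proj_onto V Q \<longleftrightarrow> (\<forall>S. Q S \<in> V) \<and>
     (\<forall>S. \<forall>v\<in>V. hs_inner v (\<lambda>i j. S i j - Q S i j) = 0)"

text \<open>Multi-edge indicator: the element P of M (x) M^op (x) N (x) N^op with pi(P)
the orthogonal projection onto V (pi is faithful, so P is unique and is a projection).\<close>
definition multi_edge_indicator ::
  "'h::finite sqmat set \<Rightarrow> 'k::finite sqmat set \<Rightarrow> ('h \<times> 'k) sqmat set
     \<Rightarrow> ('h \<times> 'h \<times> 'k \<times> 'k) sqmat \<Rightarrow> bool" where
  "multi_edge_indicator M N V P \<longleftrightarrow>
     P \<in> alg_tensor4 M M N N \<and> is_orth_proj_onto V (weaver_pi P)"

text \<open>(id (x) id (x) m): multiply the 3rd and 4th tensor factors.\<close>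
definition mult_34 :: "('a \<times> 'b \<times> 'c::finite \<times> 'c) sqmat \<Rightarrow> ('a \<times> 'b \<times> 'c) sqmat" where
  "mult_34 P = (\<lambda>(i, i', k) (j, j', l). \<Sum>x\<in>UNIV. P (i, i', k, x) (j, j', x, l))"

definition trace_3 :: "('a \<times> 'b \<times> 'c::finite) sqmat \<Rightarrow> ('a \<times> 'b) sqmat" where
  "trace_3 Q = (\<lambda>(i, i') (j, j'). \<Sum>k\<in>UNIV. Q (i, i', k) (j, j', k))"

definition trace_1 :: "('a::finite \<times> 'b) sqmat \<Rightarrow> 'b sqmat" where
  "trace_1 X = (\<lambda>i' j'. \<Sum>i\<in>UNIV. X (i, i') (i, j'))"

definition trace_13 :: "('a::finite \<times> 'b \<times> 'c::finite \<times> 'd) sqmat \<Rightarrow> ('b \<times> 'd) sqmat" where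
  "trace_13 Z = (\<lambda>(i', k') (j', l'). \<Sum>i\<in>UNIV. \<Sum>k\<in>UNIV. Z (i, i', k, k') (i, j', k, l'))"

definition emb_13 :: "('a \<times> 'c) sqmat \<Rightarrow> ('a \<times> 'b \<times> 'c \<times> 'd) sqmat" where
  "emb_13 Y = (\<lambda>(i, i', k, k') (j, j', l, l'). Y (i, k) (j, l) * mone i' j' * mone k' l')"

definition S_V :: "('h::finite \<times> 'h \<times> 'k::finite \<times> 'k) sqmat \<Rightarrow> ('h \<times> 'h) sqmat" where
  "S_V P = trace_3 (mult_34 P)"

text \<open>Quantum multi-adjacency operator, applied to Y in M (x) N (a (x) b \<mapsto>
(tr (x) id (x) tr (x) id)(P (a (x) 1 (x) b (x) 1))); the product with elements of the
form x (x) 1 (x) y (x) 1 agrees in the opposite algebra with the matrix product.\<close>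
definition multi_adjacency :: "('h::finite \<times> 'h \<times> 'k::finite \<times> 'k) sqmat
    \<Rightarrow> ('h \<times> 'k) sqmat \<Rightarrow> ('h \<times> 'k) sqmat" where
  "multi_adjacency P Y = trace_13 (mmult P (emb_13 Y))"

definition weighted_adjacency :: "('h::finite \<times> 'h) sqmat \<Rightarrow> 'h sqmat \<Rightarrow> 'h sqmat" where
  "weighted_adjacency S m = trace_1 (mmult S (kron m mone))"

definition hs_onb :: "'a::finite sqmat set \<Rightarrow> 'a sqmat set \<Rightarrow> bool" where
  "hs_onb N B \<longleftrightarrow> finite B \<and> B \<subseteq> N \<and>
     (\<forall>b\<in>B. \<forall>b'\<in>B. hs_inner b b' = (if b = b' then 1 else 0)) \<and>
     (\<forall>x\<in>N. \<exists>c. x = (\<lambda>i j. \<Sum>b\<in>B. c b * b i j))"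

definition slice_2 :: "'k::finite sqmat \<Rightarrow> ('h \<times> 'k) sqmat \<Rightarrow> 'h sqmat" where
  "slice_2 f Y = (\<lambda>i j. \<Sum>k\<in>UNIV. \<Sum>l\<in>UNIV. cnj (f k l) * Y (i, k) (j, l))"

text \<open>(id (x) Tr_{L^2(N)})(A), for A a linear map on L^2(M)(x)L^2(N), computed in an
orthonormal basis B of L^2(N), applied to m.\<close>
definition partial_trace_L2 ::
  "'k::finite sqmat set \<Rightarrow> (('h \<times> 'k) sqmat \<Rightarrow> ('h \<times> 'k) sqmat) \<Rightarrow> 'h sqmat \<Rightarrow> 'h sqmat" where
  "partial_trace_L2 B A m = (\<lambda>i j. \<Sum>b\<in>B. slice_2 b (A (kron m b)) i j)"

end

theory Submission imports Defs begin

lemma hs_inner_lin: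
  fixes B :: "'a::finite sqmat set"
  shows "hs_inner b0 (\<lambda>i j. \<Sum>b\<in>B. c b * b i j) = (\<Sum>b\<in>B. c b * hs_inner b0 b)"
  unfolding hs_inner_def mtr_def mmult_def madj_def
  by (simp add: sum_distrib_left sum_distrib_right mult_ac sum.swap[of _ B])

lemma onb_expand:
  assumes "hs_onb N B" "x \<in> N"
  shows "x = (\<lambda>i j. \<Sum>b\<in>B. hs_inner b x * b i j)"
proof -
  from assms obtain c where c: "x = (\<lambda>i j. \<Sum>b\<in>B. c b * b i j)" unfolding hs_onb_def by blast
  have fin: "finite B" and orth: "\<forall>b\<in>B. \<forall>b'\<in>B. hs_inner b b' = (if b = b' then 1 else 0)"
    using assms(1) unfolding hs_onb_def by auto
  have "\<And>b0. b0 \<in> B \<Longrightarrow> hs_inner b0 x = c b0"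
  proof -
    fix b0 assume b0: "b0 \<in> B"
    have "hs_inner b0 x = (\<Sum>b\<in>B. c b * hs_inner b0 b)" by (subst c) (rule hs_inner_lin)
    also have "\<dots> = (\<Sum>b\<in>B. if b = b0 then c b else 0)"
      by (rule sum.cong) (use orth b0 in auto)
    also have "\<dots> = c b0" using fin b0 by simp
    finally show "hs_inner b0 x = c b0" .
  qed
  then have "(\<lambda>i j. \<Sum>b\<in>B. hs_inner b x * b i j) = (\<lambda>i j. \<Sum>b\<in>B. c b * b i j)"
    by (intro ext sum.cong) auto
  then show ?thesis using c by simp
qed

lemma key1:
  assumes "hs_onb N B" "fd_vn_algebra N" "c \<in> N"
  shows "(\<Sum>b\<in>B. cnj (b k' l') * (\<Sum>k\<in>UNIV. \<Sum>g\<in>UNIV. c k g * b g k)) = c l' k'"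
proof -
  have ca: "madj c \<in> N" using assms(2,3) unfolding fd_vn_algebra_def by auto
  have e: "madj c = (\<lambda>i j. \<Sum>b\<in>B. hs_inner b (madj c) * b i j)" using onb_expand[OF assms(1) ca] .
  have "c l' k' = cnj (madj c k' l')" by (simp add: madj_def)
  also have "\<dots> = cnj (\<Sum>b\<in>B. hs_inner b (madj c) * b k' l')" by (subst e) simp
  also have "\<dots> = (\<Sum>b\<in>B. cnj (b k' l') * cnj (hs_inner b (madj c)))" by (simp add: mult.commute)
  also have "\<dots> = (\<Sum>b\<in>B. cnj (b k' l') * (\<Sum>k\<in>UNIV. \<Sum>g\<in>UNIV. c k g * b g k))"
    unfolding hs_inner_def mtr_def mmult_def madj_def
    by (simp add: mult.commute)
  finally show ?thesis by simp
qed

lemma msum_cons: "msum_list (x # xs) = (\<lambda>i j. x i j + msum_list xs i j)"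
  by (simp add: msum_list_def)

lemma msum_nil: "msum_list [] = (\<lambda>i j. 0)"
  by (simp add: msum_list_def)

lemma key2_list:
  assumes "hs_onb N B" "fd_vn_algebra N"
    and "\<forall>(a, b, c, d)\<in>set xs. c \<in> N"
  shows "(\<Sum>bb\<in>B. cnj (bb k' l') * (\<Sum>k\<in>UNIV. \<Sum>g\<in>UNIV.
      msum_list (map (\<lambda>(a, b, c, d). kron4 a b c d) xs) (i,i',k,k') (g1,j',g,l') * bb g k))
    = msum_list (map (\<lambda>(a, b, c, d). kron4 a b c d) xs) (i,i',l',k') (g1,j',k',l')"
  using assms(3)
proof (induction xs)
  case Nil
  then show ?case by (simp add: msum_nil)
next
  case (Cons x xs)
  obtain a b c d where x: "x = (a, b, c, d)" by (cases x) auto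
  have cN: "c \<in> N" using Cons.prems x by auto
  have IH: "(\<Sum>bb\<in>B. cnj (bb k' l') * (\<Sum>k\<in>UNIV. \<Sum>g\<in>UNIV.
      msum_list (map (\<lambda>(a, b, c, d). kron4 a b c d) xs) (i,i',k,k') (g1,j',g,l') * bb g k))
    = msum_list (map (\<lambda>(a, b, c, d). kron4 a b c d) xs) (i,i',l',k') (g1,j',k',l')"
    using Cons by auto
  let ?R = "msum_list (map (\<lambda>(a, b, c, d). kron4 a b c d) xs)"
  let ?al = "a i g1 * b i' j' * d k' l'"
  have T: "(\<Sum>bb\<in>B. cnj (bb k' l') * (\<Sum>k\<in>UNIV. \<Sum>g\<in>UNIV.
      kron4 a b c d (i,i',k,k') (g1,j',g,l') * bb g k)) = kron4 a b c d (i,i',l',k') (g1,j',k',l')"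
  proof -
    have "(\<Sum>bb\<in>B. cnj (bb k' l') * (\<Sum>k\<in>UNIV. \<Sum>g\<in>UNIV.
      kron4 a b c d (i,i',k,k') (g1,j',g,l') * bb g k))
      = (\<Sum>bb\<in>B. ?al * (cnj (bb k' l') * (\<Sum>k\<in>UNIV. \<Sum>g\<in>UNIV. c k g * bb g k)))"
      unfolding kron4_def by (simp add: sum_distrib_left mult_ac)
    also have "\<dots> = ?al * c l' k'"
      by (simp only: sum_distrib_left[symmetric] key1[OF assms(1,2) cN])
    finally show ?thesis by (simp add: kron4_def mult_ac)
  qed
  have "(\<Sum>bb\<in>B. cnj (bb k' l') * (\<Sum>k\<in>UNIV. \<Sum>g\<in>UNIV.
      msum_list (map (\<lambda>(a, b, c, d). kron4 a b c d) (x # xs)) (i,i',k,k') (g1,j',g,l') * bb g k))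
    = (\<Sum>bb\<in>B. cnj (bb k' l') * (\<Sum>k\<in>UNIV. \<Sum>g\<in>UNIV.
      kron4 a b c d (i,i',k,k') (g1,j',g,l') * bb g k))
    + (\<Sum>bb\<in>B. cnj (bb k' l') * (\<Sum>k\<in>UNIV. \<Sum>g\<in>UNIV. ?R (i,i',k,k') (g1,j',g,l') * bb g k))"
    by (simp add: x msum_cons distrib_left distrib_right sum.distrib)
  also have "\<dots> = msum_list (map (\<lambda>(a, b, c, d). kron4 a b c d) (x # xs)) (i,i',l',k') (g1,j',k',l')"
    by (simp only: T IH) (simp add: x msum_cons)
  finally show ?case .
qed

lemma sum_UNIV_prod: "(\<Sum>x\<in>(UNIV::('a::finite \<times> 'b::finite) set). f x) = (\<Sum>a\<in>UNIV. \<Sum>b\<in>UNIV. f (a, b))"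
  by (simp add: sum.cartesian_product UNIV_Times_UNIV[symmetric] del: UNIV_Times_UNIV)

lemma ifmult: "(if c then (1::complex) else 0) * y = (if c then y else 0)"
  "y * (if c then (1::complex) else 0) = (if c then y else 0)"
  "(if c then (y::complex) else 0) * z = (if c then y * z else 0)"
  "z * (if c then (y::complex) else 0) = (if c then z * y else 0)"
  by auto

lemma sum_if_const: "(\<Sum>x\<in>A. if c then f x else 0) = (if c then sum f A else 0)"
  by auto

lemma stepA:
  fixes P :: "('h::finite \<times> 'h \<times> 'k::finite \<times> 'k) sqmat"
  shows "multi_adjacency P (kron m bb) (i',k') (j',l') =
    (\<Sum>i\<in>UNIV. \<Sum>k\<in>UNIV. \<Sum>g1\<in>UNIV. \<Sum>g3\<in>UNIV. P (i,i',k,k') (g1,j',g3,l') * (m g1 i * bb g3 k))"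
  unfolding multi_adjacency_def trace_13_def mmult_def emb_13_def kron_def mone_def
  by (simp add: sum_UNIV_prod ifmult sum_if_const mult_ac)

lemma stepB:
  fixes P :: "('h::finite \<times> 'h \<times> 'k::finite \<times> 'k) sqmat"
  shows "weighted_adjacency (S_V P) m i' j' =
    (\<Sum>i\<in>UNIV. \<Sum>g1\<in>UNIV. \<Sum>k\<in>UNIV. \<Sum>x\<in>UNIV. P (i,i',k,x) (g1,j',x,k) * m g1 i)"
  unfolding weighted_adjacency_def S_V_def trace_1_def trace_3_def mult_34_def mmult_def kron_def mone_def
  by (simp add: sum_UNIV_prod ifmult sum_distrib_left) (simp add: mult_ac sum_distrib_left)

lemma inner:
  fixes P :: "('h::finite \<times> 'h \<times> 'k::finite \<times> 'k) sqmat" and B :: "'k sqmat set"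
  shows "(\<Sum>bb\<in>B. cnj (bb k' l') * (\<Sum>i\<in>UNIV. \<Sum>k\<in>UNIV. \<Sum>g1\<in>UNIV. \<Sum>g3\<in>UNIV. P (i,i',k,k') (g1,j',g3,l') * (m g1 i * bb g3 k)))
   = (\<Sum>i\<in>UNIV. \<Sum>g1\<in>UNIV. m g1 i * (\<Sum>bb\<in>B. cnj (bb k' l') * (\<Sum>k\<in>UNIV. \<Sum>g3\<in>UNIV. P (i,i',k,k') (g1,j',g3,l') * bb g3 k)))"
proof -
  have "\<And>bb. (\<Sum>i\<in>UNIV. \<Sum>k\<in>UNIV. \<Sum>g1\<in>UNIV. \<Sum>g3\<in>UNIV. P (i,i',k,k') (g1,j',g3,l') * (m g1 i * bb g3 k))
     = (\<Sum>i\<in>UNIV. \<Sum>g1\<in>UNIV. m g1 i * (\<Sum>k\<in>UNIV. \<Sum>g3\<in>UNIV. P (i,i',k,k') (g1,j',g3,l') * bb g3 k))"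
    by (rule sum.cong[OF refl], subst sum.swap) (simp add: sum_distrib_left mult_ac)
  then have "?thesis \<longleftrightarrow> (\<Sum>bb\<in>B. \<Sum>i\<in>UNIV. \<Sum>g1\<in>UNIV. cnj (bb k' l') * (m g1 i * (\<Sum>k\<in>UNIV. \<Sum>g3\<in>UNIV. P (i,i',k,k') (g1,j',g3,l') * bb g3 k)))
   = (\<Sum>i\<in>UNIV. \<Sum>g1\<in>UNIV. \<Sum>bb\<in>B. m g1 i * (cnj (bb k' l') * (\<Sum>k\<in>UNIV. \<Sum>g3\<in>UNIV. P (i,i',k,k') (g1,j',g3,l') * bb g3 k)))"
    by (simp only: sum_distrib_left)
  moreover have "(\<Sum>bb\<in>B. \<Sum>i\<in>UNIV. \<Sum>g1\<in>UNIV. cnj (bb k' l') * (m g1 i * (\<Sum>k\<in>UNIV. \<Sum>g3\<in>UNIV. P (i,i',k,k') (g1,j',g3,l') * bb g3 k)))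
   = (\<Sum>i\<in>UNIV. \<Sum>g1\<in>UNIV. \<Sum>bb\<in>B. m g1 i * (cnj (bb k' l') * (\<Sum>k\<in>UNIV. \<Sum>g3\<in>UNIV. P (i,i',k,k') (g1,j',g3,l') * bb g3 k)))"
    apply (rule trans[OF sum.swap[where A=B]])
    apply (rule sum.cong[OF refl])
    apply (rule trans[OF sum.swap[where A=B]])
    apply (simp add: mult_ac)
    done
  ultimately show ?thesis by blast
qed

theorem proposition4p12:
  fixes M :: "'h::finite sqmat set" and N :: "'k::finite sqmat set"
    and V :: "('h \<times> 'k) sqmat set" and P :: "('h \<times> 'h \<times> 'k \<times> 'k) sqmat"
    and B :: "'k sqmat set"
  assumes "fd_vn_algebra M" and "fd_vn_algebra N"
    and "minimally_represented M" and "minimally_represented N"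
    and "quantum_multi_relation M N V"
    and "multi_edge_indicator M N V P"
    and "hs_onb N B"
    and "m \<in> M"
  shows "partial_trace_L2 B (multi_adjacency P) m = weighted_adjacency (S_V P) m"
proof (rule ext, rule ext)
  fix i' j'
  have fin: "finite B" using assms(7) unfolding hs_onb_def by auto
  obtain xs where P: "P = msum_list (map (\<lambda>(a, b, c, d). kron4 a b c d) xs)"
    and xs: "\<forall>(a, b, c, d)\<in>set xs. a \<in> M \<and> b \<in> M \<and> c \<in> N \<and> d \<in> N"
    using assms(6) unfolding multi_edge_indicator_def alg_tensor4_def by blast
  have xsN: "\<forall>(a, b, c, d)\<in>set xs. c \<in> N" using xs by auto
  have K: "\<And>i g1 k' l'. (\<Sum>bb\<in>B. cnj (bb k' l') * (\<Sum>k\<in>UNIV. \<Sum>g\<in>UNIV. P (i,i',k,k') (g1,j',g,l') * bb g k))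
      = P (i,i',l',k') (g1,j',k',l')"
    unfolding P by (rule key2_list[OF assms(7,2) xsN])
  have "partial_trace_L2 B (multi_adjacency P) m i' j'
     = (\<Sum>bb\<in>B. \<Sum>k'\<in>UNIV. \<Sum>l'\<in>UNIV. cnj (bb k' l') *
         (\<Sum>i\<in>UNIV. \<Sum>k\<in>UNIV. \<Sum>g1\<in>UNIV. \<Sum>g3\<in>UNIV. P (i,i',k,k') (g1,j',g3,l') * (m g1 i * bb g3 k)))"
    unfolding partial_trace_L2_def slice_2_def stepA ..
  also have "\<dots> = (\<Sum>k'\<in>UNIV. \<Sum>l'\<in>UNIV. \<Sum>bb\<in>B. cnj (bb k' l') *
         (\<Sum>i\<in>UNIV. \<Sum>k\<in>UNIV. \<Sum>g1\<in>UNIV. \<Sum>g3\<in>UNIV. P (i,i',k,k') (g1,j',g3,l') * (m g1 i * bb g3 k)))"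
    apply (rule trans[OF sum.swap[where A=B]])
    apply (rule sum.cong[OF refl])
    apply (rule sum.swap[where A=B])
    done
  also have "\<dots> = (\<Sum>k'\<in>UNIV. \<Sum>l'\<in>UNIV. \<Sum>i\<in>UNIV. \<Sum>g1\<in>UNIV. m g1 i * P (i,i',l',k') (g1,j',k',l'))"
    by (simp only: inner K)
  also have "\<dots> = (\<Sum>k'\<in>UNIV. \<Sum>i\<in>UNIV. \<Sum>l'\<in>UNIV. \<Sum>g1\<in>UNIV. m g1 i * P (i,i',l',k') (g1,j',k',l'))"
    by (rule sum.cong[OF refl], rule sum.swap)
  also have "\<dots> = (\<Sum>i\<in>UNIV. \<Sum>k'\<in>UNIV. \<Sum>l'\<in>UNIV. \<Sum>g1\<in>UNIV. m g1 i * P (i,i',l',k') (g1,j',k',l'))"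
    by (rule sum.swap)
  also have "\<dots> = (\<Sum>i\<in>UNIV. \<Sum>l'\<in>UNIV. \<Sum>k'\<in>UNIV. \<Sum>g1\<in>UNIV. m g1 i * P (i,i',l',k') (g1,j',k',l'))"
    by (rule sum.cong[OF refl], rule sum.swap)
  also have "\<dots> = (\<Sum>i\<in>UNIV. \<Sum>l'\<in>UNIV. \<Sum>g1\<in>UNIV. \<Sum>k'\<in>UNIV. m g1 i * P (i,i',l',k') (g1,j',k',l'))"
    by (rule sum.cong[OF refl], rule sum.cong[OF refl], rule sum.swap)
  also have "\<dots> = (\<Sum>i\<in>UNIV. \<Sum>g1\<in>UNIV. \<Sum>l'\<in>UNIV. \<Sum>k'\<in>UNIV. m g1 i * P (i,i',l',k') (g1,j',k',l'))"
    by (rule sum.cong[OF refl], rule sum.swap)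
  also have "\<dots> = (\<Sum>i\<in>UNIV. \<Sum>g1\<in>UNIV. \<Sum>k\<in>UNIV. \<Sum>x\<in>UNIV. P (i,i',k,x) (g1,j',x,k) * m g1 i)"
    by (simp add: mult_ac)
  also have "\<dots> = weighted_adjacency (S_V P) m i' j'" by (rule stepB[symmetric])
  finally show "partial_trace_L2 B (multi_adjacency P) m i' j' = weighted_adjacency (S_V P) m i' j'" .
qed

end
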